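(* Let $u_1,u_2,u_3,u_4,u_5\in\Sigma^*$ and letters $a_i,a_j,a_k\in\Sigma$ with $a_j\neq a_k$, $a_j\neq a_i$ and $a_i\neq a_k$, such that $a_k$ is not a suffix of $u_3$. Let $w=u_1a_iu_2a_ju_3a_ku_4a_iu_5$. Then there exists an element of $\mathtt{BR}(w)$ which is not rich.
   Context: $\Sigma$ is an alphabet and $\Sigma^*$ the set of finite words over it (including the empty word). For a word $w=w_1\cdots w_n$, $w^R=w_n\cdots w_1$; $w$ is a palindrome if $w=w^R$; a factor of $w$ is a word $u$ with $w=puq$. A word $w$ is rich if the number of distinct nonempty palindromic factors of $w$ equals $|w|$. The block reversal of a nonempty word $w$ is $\mathtt{BR}(w)=\{B_t\cdots B_1 : w=B_1\cdots B_t,\ t\ge1,\ \text{each } B_i \text{ nonempty}\}$. *)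

theory Defs
  imports Main
begin

definition is_palindrome :: "'a list \<Rightarrow> bool" where
  "is_palindrome w \<longleftrightarrow> w = rev w"

definition is_factor :: "'a list \<Rightarrow> 'a list \<Rightarrow> bool" where
  "is_factor u w \<longleftrightarrow> (\<exists>p q. w = p @ u @ q)"

definition pal_factors :: "'a list \<Rightarrow> 'a list set" where
  "pal_factors w = {u. u \<noteq> [] \<and> is_factor u w \<and> is_palindrome u}"

definition rich :: "'a list \<Rightarrow> bool" where
  "rich w \<longleftrightarrow> card (pal_factors w) = length w"

definition BR :: "'a list \<Rightarrow> 'a list set" where
  "BR w = {concat (rev Bs) | Bs. Bs \<noteq> [] \<and> (\<forall>B\<in>set Bs. B \<noteq> []) \<and> concat Bs = w}"

end

theory Submission
  imports Defs
begin

lemma fin_pal: "finite (pal_factors w)"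
proof -
  have "pal_factors w \<subseteq> {xs. set xs \<subseteq> set w \<and> length xs \<le> length w}"
    unfolding pal_factors_def is_factor_def by auto
  moreover have "finite {xs. set xs \<subseteq> set w \<and> length xs \<le> length w}"
    by (rule finite_lists_length_le) simp
  ultimately show ?thesis by (rule finite_subset)
qed

lemma pal_nil: "pal_factors [] = {}"
  unfolding pal_factors_def is_factor_def by auto

lemma factor_snoc_tail:
  assumes "w @ [c] = P @ p @ Q" "Q \<noteq> []" shows "is_factor p w"
proof -
  obtain Q' d where "Q = Q' @ [d]" using assms(2) rev_exhaust by blast
  then have "w = P @ p @ Q'" using assms(1) by simp
  then show ?thesis unfolding is_factor_def by blast
qed

lemma new_is_suffix:
  assumes "p \<in> pal_factors (w @ [c]) - pal_factors w"
  shows "\<exists>P. w @ [c] = P @ p"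
proof -
  have "is_factor p (w @ [c])" using assms unfolding pal_factors_def by blast
  then obtain P Q where e: "w @ [c] = P @ p @ Q"
    unfolding is_factor_def by blast
  have "Q = []"
  proof (rule ccontr)
    assume "Q \<noteq> []"
    then have "is_factor p w" by (rule factor_snoc_tail[OF e])
    then show False using assms unfolding pal_factors_def by blast
  qed
  then have "w @ [c] = P @ p" using e by simp
  then show ?thesis by blast
qed

lemma new_unique_aux:
  assumes p: "p \<in> pal_factors (w @ [c]) - pal_factors w"
    and q: "q \<in> pal_factors (w @ [c]) - pal_factors w"
    and len: "length p \<le> length q"
  shows "p = q"
proof -
  obtain P where P: "w @ [c] = P @ p" using new_is_suffix[OF p] by blast
  obtain R where R: "w @ [c] = R @ q" using new_is_suffix[OF q] by blast
  have "P @ p = R @ q" using P R by simp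
  then have "(\<exists>us. P = R @ us \<and> us @ p = q) \<or> (\<exists>us. P @ us = R \<and> p = us @ q)"
    using append_eq_append_conv2[of P p R q] by blast
  then obtain r where r: "q = r @ p"
  proof
    assume "\<exists>us. P = R @ us \<and> us @ p = q"
    then show ?thesis using that by blast
  next
    assume "\<exists>us. P @ us = R \<and> p = us @ q"
    then obtain us where "p = us @ q" by blast
    then have "us = []" using len by simp
    then show ?thesis using that \<open>p = us @ q\<close> by simp
  qed
  show ?thesis
  proof (cases "r = []")
    case True then show ?thesis using r by simp
  next
    case False
    have qp: "q = rev q" using q unfolding pal_factors_def is_palindrome_def by auto
    have pp: "p = rev p" using p unfolding pal_factors_def is_palindrome_def by auto
    have "rev q = rev (r @ p)" using r by simp
    then have "q = rev (r @ p)" by (rule trans[OF qp])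
    then have q1: "q = rev p @ rev r" by simp
    have "rev p = p" by (rule sym[OF pp])
    then have "q = p @ rev r" using q1 by simp
    then have "w @ [c] = R @ p @ rev r" using R by simp
    moreover have "rev r \<noteq> []" using False by simp
    ultimately have "is_factor p w" by (rule factor_snoc_tail)
    then show ?thesis using p unfolding pal_factors_def by auto
  qed
qed

lemma card_snoc: "card (pal_factors (w @ [c])) \<le> Suc (card (pal_factors w))"
proof -
  let ?A = "pal_factors (w @ [c])" and ?B = "pal_factors w"
  have "card (?A - ?B) \<le> Suc 0"
  proof (subst card_le_Suc0_iff_eq)
    show "finite (?A - ?B)" using fin_pal by blast
    show "\<forall>a1\<in>?A - ?B. \<forall>a2\<in>?A - ?B. a1 = a2"
    proof (intro ballI)
      fix a1 a2 assume h: "a1 \<in> ?A - ?B" "a2 \<in> ?A - ?B"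
      show "a1 = a2"
      proof (cases "length a1 \<le> length a2")
        case True then show ?thesis using new_unique_aux[OF h] by blast
      next
        case False then have "length a2 \<le> length a1" by simp
        then show ?thesis using new_unique_aux[OF h(2) h(1)] by simp
      qed
    qed
  qed
  moreover have "?A \<subseteq> (?A - ?B) \<union> ?B" by blast
  then have "card ?A \<le> card ((?A - ?B) \<union> ?B)" by (intro card_mono) (auto simp: fin_pal)
  moreover have "card ((?A - ?B) \<union> ?B) \<le> card (?A - ?B) + card ?B" by (rule card_Un_le)
  ultimately show ?thesis by linarith
qed

lemma factor_rev: "is_factor u (rev w) \<longleftrightarrow> is_factor (rev u) w"
proof
  assume "is_factor u (rev w)"
  then obtain p q where "rev w = p @ u @ q" unfolding is_factor_def by blast
  then have "rev (rev w) = rev (p @ u @ q)" by simp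
  then have "w = rev q @ rev u @ rev p" by simp
  then show "is_factor (rev u) w" unfolding is_factor_def by blast
next
  assume "is_factor (rev u) w"
  then obtain p q where "w = p @ rev u @ q" unfolding is_factor_def by blast
  then have "rev w = rev q @ u @ rev p" by simp
  then show "is_factor u (rev w)" unfolding is_factor_def by blast
qed

lemma pal_revI: "is_palindrome u \<Longrightarrow> rev u = u"
  unfolding is_palindrome_def by (rule sym)

lemma pal_rev: "pal_factors (rev w) = pal_factors w"
  unfolding pal_factors_def by (auto simp: factor_rev pal_revI)

lemma card_cons: "card (pal_factors (c # w)) \<le> Suc (card (pal_factors w))"
proof -
  have "pal_factors (c # w) = pal_factors (rev (rev w @ [c]))" by simp
  also have "\<dots> = pal_factors (rev w @ [c])" by (rule pal_rev)
  finally have "pal_factors (c # w) = pal_factors (rev w @ [c])" .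
  moreover have "card (pal_factors (rev w @ [c])) \<le> Suc (card (pal_factors (rev w)))" by (rule card_snoc)
  ultimately show ?thesis by (simp add: pal_rev)
qed

lemma card_left: "card (pal_factors (x @ y)) \<le> card (pal_factors y) + length x"
proof (induction x)
  case Nil then show ?case by simp
next
  case (Cons c x) then show ?case using card_cons[of c "x @ y"] by simp
qed

lemma card_right: "card (pal_factors (y @ z)) \<le> card (pal_factors y) + length z"
proof (induction z rule: rev_induct)
  case Nil then show ?case by simp
next
  case (snoc c z) then show ?case using card_snoc[of "y @ z" c] by simp
qed

lemma card_mid: "card (pal_factors (x @ y @ z)) \<le> card (pal_factors y) + length x + length z"
  using card_left[of x "y @ z"] card_right[of y z] by simp

lemma card_le_len: "card (pal_factors w) \<le> length w"
  using card_left[of w "[]"] by (simp add: pal_nil)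

lemma return_sub:
  assumes "a \<notin> set M" "a # M @ [a] \<noteq> rev (a # M @ [a])"
  shows "pal_factors (a # M @ [a]) \<subseteq> pal_factors (a # M)"
proof
  fix u assume u: "u \<in> pal_factors (a # M @ [a])"
  show "u \<in> pal_factors (a # M)"
  proof (cases "u \<in> pal_factors (a # M)")
    case False
    then obtain P where P: "a # M @ [a] = P @ u"
      using new_is_suffix[of u "a # M" a] u by auto
    have ne: "u \<noteq> []" and up: "u = rev u" using u unfolding pal_factors_def is_palindrome_def by auto
    have "last (P @ u) = last u" using ne by simp
    moreover have "last (a # M @ [a]) = last (P @ u)" using P by (rule arg_cong)
    ultimately have "last u = a" by simp
    moreover have "hd u = hd (rev u)" using up by (rule arg_cong)
    ultimately have "hd u = a" by (simp add: hd_rev)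
    show ?thesis
    proof (cases P)
      case Nil
      then have e1: "u = a # M @ [a]" using P by simp
      have "a # M @ [a] = rev (a # M @ [a])" using up unfolding e1 .
      then show ?thesis using assms(2) by blast
    next
      case (Cons x P')
      from P have "a # M @ [a] = (x # P') @ u" by (simp only: Cons)
      then have "a # M @ [a] = x # (P' @ u)" by (simp only: append_Cons)
      then have MP: "M @ [a] = P' @ u" by (rule list.inject[THEN iffD1, THEN conjunct2])
      obtain u' where uu: "u = a # u'" using ne \<open>hd u = a\<close> by (cases u) auto
      show ?thesis
      proof (cases u')
        case Nil
        have "a # M = [] @ [a] @ M" by simp
        then have "is_factor [a] (a # M)" unfolding is_factor_def by blast
        then show ?thesis using uu Nil unfolding pal_factors_def is_palindrome_def by simp
      next
        case (Cons y u'')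
        have "M @ [a] = P' @ a # y # u''" using MP uu Cons by simp
        then have "butlast (M @ [a]) = butlast (P' @ a # y # u'')" by simp
        then have "M = P' @ a # butlast (y # u'')" by (simp add: butlast_append)
        then have "a \<in> set M" by simp
        then show ?thesis using assms(1) by simp
      qed
    qed
  qed simp
qed

lemma not_rich_return:
  assumes "a \<notin> set M" "a # M @ [a] \<noteq> rev (a # M @ [a])"
  shows "\<not> rich (x @ (a # M @ [a]) @ z)"
proof -
  have "card (pal_factors (a # M @ [a])) \<le> card (pal_factors (a # M))"
    using return_sub[OF assms] fin_pal by (intro card_mono) auto
  also have "\<dots> \<le> length (a # M)" by (rule card_le_len)
  finally have "card (pal_factors (a # M @ [a])) < length (a # M @ [a])" by simp
  then have "card (pal_factors (x @ (a # M @ [a]) @ z)) < length (x @ (a # M @ [a]) @ z)"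
    using card_mid[of x "a # M @ [a]" z] by simp
  then show ?thesis unfolding rich_def by simp
qed


lemma concat_filter_ne: "concat (filter (\<lambda>B. B \<noteq> []) L) = concat L"
  by (induction L) auto

lemma BR_intro:
  assumes "concat L = w" "\<exists>B\<in>set L. B \<noteq> []"
  shows "concat (rev L) \<in> BR w"
proof -
  let ?Bs = "filter (\<lambda>B. B \<noteq> []) L"
  have f1: "?Bs \<noteq> []" using assms(2) by (auto simp: filter_empty_conv)
  have f2: "concat ?Bs = w" using assms(1) by (simp add: concat_filter_ne)
  have f3: "concat (rev L) = concat (rev ?Bs)"
    by (simp add: rev_filter concat_filter_ne)
  have f4: "\<forall>B\<in>set ?Bs. B \<noteq> []" by simp
  have "\<exists>Bs. concat (rev L) = concat (rev Bs) \<and> Bs \<noteq> [] \<and> (\<forall>B\<in>set Bs. B \<noteq> []) \<and> concat Bs = w"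
    by (rule exI[of _ ?Bs]) (intro conjI f1 f2 f3 f4)
  then show ?thesis unfolding BR_def by (simp only: mem_Collect_eq)
qed

lemma split_run: "\<exists>s n. L = s @ replicate n a \<and> (s = [] \<or> last s \<noteq> a)"
proof (induction L rule: rev_induct)
  case Nil then show ?case by auto
next
  case (snoc x xs)
  show ?case
  proof (cases "x = a")
    case True
    from snoc obtain s n where "xs = s @ replicate n a" "s = [] \<or> last s \<noteq> a" by blast
    then have "xs @ [x] = s @ replicate (Suc n) a" using True by (simp add: replicate_append_same)
    then show ?thesis using \<open>s = [] \<or> last s \<noteq> a\<close> by blast
  next
    case False
    then have "xs @ [x] = (xs @ [x]) @ replicate 0 a \<and> (xs @ [x] = [] \<or> last (xs @ [x]) \<noteq> a)" by simp
    then show ?thesis by blast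
  qed
qed

lemma core:
  fixes u1 u2 u3 u4 u5 :: "'a list" and ai aj ak :: 'a
  assumes "aj \<noteq> ak" and "aj \<noteq> ai" and "ai \<noteq> ak" and "ak \<notin> set u3"
  shows "\<exists>v \<in> BR (u1 @ [ai] @ u2 @ [aj] @ u3 @ [ak] @ u4 @ [ai] @ u5). \<not> rich v"
proof -
  obtain s n where sn: "u3 = s @ replicate n ai" "s = [] \<or> last s \<noteq> ai" using split_run[of u3 ai] by (elim exE conjE) iprover
  define Z where "Z = u1 @ ai # u2 @ aj # s"
  have "ai \<in> set Z" unfolding Z_def by simp
  then obtain Z1 T where ZT: "Z = Z1 @ ai # T" "ai \<notin> set T" using split_list_last by metis
  define d where "d = last (aj # s)"
  have lZ: "last Z = d" unfolding Z_def d_def by simp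
  have dai: "d \<noteq> ai" using sn(2) assms(2) unfolding d_def by (cases s) auto
  have "d \<in> set (aj # s)" unfolding d_def by (rule last_in_set) simp
  then have dak: "d \<noteq> ak" using assms(1,4) sn(1) by auto
  have Tne: "T \<noteq> []" using ZT(1) lZ dai by auto
  have lT: "last T = d" using ZT(1) lZ Tne by simp
  define M where "M = ak # T"
  have aiM: "ai \<notin> set M" unfolding M_def using ZT(2) assms(3) by simp
  have npal: "ai # M @ [ai] \<noteq> rev (ai # M @ [ai])"
  proof
    assume h: "ai # M @ [ai] = rev (ai # M @ [ai])"
    have "hd (tl (ai # M @ [ai])) = hd (tl (rev (ai # M @ [ai])))" using h by (rule arg_cong)
    then have "ak = last T" unfolding M_def using Tne by (simp add: hd_append hd_rev)
    then show False using lT dak by simp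
  qed
  let ?w = "u1 @ [ai] @ u2 @ [aj] @ u3 @ [ak] @ u4 @ [ai] @ u5"
  have wZ: "?w = Z @ replicate n ai @ [ak] @ u4 @ [ai] @ u5" unfolding Z_def using sn(1) by simp
  have nr: "\<not> rich (x @ (ai # M @ [ai]) @ y)" for x y by (rule not_rich_return[OF aiM npal])
  show ?thesis
  proof (cases n)
    case 0
    let ?L = "[Z1, [ai], T, [ak], u4 @ [ai], u5]"
    have "concat ?L = (Z1 @ ai # T) @ [ak] @ u4 @ [ai] @ u5" by simp
    also have "\<dots> = ?w" using wZ 0 ZT(1) by simp
    finally have inBR: "concat (rev ?L) \<in> BR ?w" by (intro BR_intro) auto
    have eq: "concat (rev ?L) = (u5 @ u4) @ (ai # M @ [ai]) @ Z1" unfolding M_def by simp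
    have "\<not> rich (concat (rev ?L))" unfolding eq by (rule nr)
    then show ?thesis using inBR by blast
  next
    case (Suc k)
    let ?L = "[Z1, [ai], T, replicate n ai @ [ak], u4 @ ai # u5]"
    have "concat ?L = (Z1 @ ai # T) @ replicate n ai @ [ak] @ u4 @ [ai] @ u5" by simp
    also have "\<dots> = ?w" using wZ ZT(1) by simp
    finally have inBR: "concat (rev ?L) \<in> BR ?w" by (intro BR_intro) auto
    have "replicate n ai = replicate k ai @ [ai]" using Suc by (simp add: replicate_append_same)
    then have eq: "concat (rev ?L) = (u4 @ ai # u5 @ replicate k ai) @ (ai # M @ [ai]) @ Z1"
      unfolding M_def by simp
    have "\<not> rich (concat (rev ?L))" unfolding eq by (rule nr)
    then show ?thesis using inBR by blast
  qed
qed

theorem mainTheorem5: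
  fixes u1 u2 u3 u4 u5 :: "'a list" and ai aj ak :: 'a
  assumes "aj \<noteq> ak" and "aj \<noteq> ai" and "ai \<noteq> ak"
    and "\<not> (\<exists>p. u3 = p @ [ak])"
  shows "\<exists>v \<in> BR (u1 @ [ai] @ u2 @ [aj] @ u3 @ [ak] @ u4 @ [ai] @ u5). \<not> rich v"
proof (cases "ak \<in> set u3")
  case True
  then obtain s0 t0 where st: "u3 = s0 @ ak # t0" "ak \<notin> set s0" using split_list_first by metis
  have "u1 @ [ai] @ u2 @ [aj] @ u3 @ [ak] @ u4 @ [ai] @ u5
      = u1 @ [ai] @ u2 @ [aj] @ s0 @ [ak] @ (t0 @ ak # u4) @ [ai] @ u5" using st(1) by simp
  then show ?thesis using core[OF assms(1-3) st(2), of u1 u2 "t0 @ ak # u4" u5] by simp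
next
  case False
  then show ?thesis using core[OF assms(1-3)] by blast
qed

end
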